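(* Let $n\geq 3$ be an integer and $p$ a prime with $\gcd(n,p(p-1))=1$. (1) Let $F(x,y)=ax^n+by^n$ with $a,b$ integers, $ab\neq 0$, and $\nu_p(a)\equiv\nu_p(b)\pmod n$. Then $R(F)$ is dense in $\mathbb{Q}_p$. (2) Let $r\geq 2$ and $F(x_1,\ldots,x_r)=a_1x_1^n+a_2x_2^n+\cdots+a_rx_r^n$ with $a_1,\ldots,a_r$ integers, $a_1a_2\cdots a_r\neq 0$, such that $\nu_p(a_i)\equiv\nu_p(a_j)\pmod n$ for some $1\leq i<j\leq r$. Then $R(F)$ is dense in $\mathbb{Q}_p$.
   Context: For an integral form $F$ in $r$ variables, $R(F)=\{F(\overline{x})/F(\overline{y}):\overline{x},\overline{y}\in\mathbb{Z}^r,\ F(\overline{y})\neq 0\}$, viewed as a subset of the field $\mathbb{Q}_p$ of $p$-adic numbers with its $p$-adic topology. $\nu_p$ denotes the $p$-adic valuation. *)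

theory Defs
  imports "HOL-Computational_Algebra.Computational_Algebra" "HOL-Number_Theory.Cong"
begin

definition padic_val :: "nat \<Rightarrow> rat \<Rightarrow> int" where
  "padic_val p q = (case quotient_of q of (a, b) \<Rightarrow>
      int (multiplicity (int p) a) - int (multiplicity (int p) b))"

definition padic_abs :: "nat \<Rightarrow> rat \<Rightarrow> real" where
  "padic_abs p q = (if q = 0 then 0 else real p powi (- padic_val p q))"

text \<open>A set of rationals is dense in Q_p iff every point of Q_p is a limit of it;
  since Q is dense in Q_p this is equivalent to: every rational is approximable
  arbitrarily well in the p-adic absolute value.\<close>
definition padic_dense :: "nat \<Rightarrow> rat set \<Rightarrow> bool" where
  "padic_dense p S \<longleftrightarrow> (\<forall>q::rat. \<forall>\<epsilon>::real. \<epsilon> > 0 \<longrightarrow> (\<exists>s\<in>S. padic_abs p (s - q) < \<epsilon>))"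

text \<open>R(F) for an integral form F, with integer vectors modelled as nat \<Rightarrow> int
  (F only depends on the first r coordinates).\<close>
definition ratio_set :: "((nat \<Rightarrow> int) \<Rightarrow> int) \<Rightarrow> rat set" where
  "ratio_set F = {of_int (F x) / of_int (F y) | x y. F y \<noteq> 0}"

end

theory Submission
  imports Defs "HOL-Number_Theory.Number_Theory"
begin

lemma pow_surj:
  fixes p n M :: nat and u :: int
  assumes p: "prime p" and c1: "coprime n p" and c2: "coprime n (p - 1)"
    and u: "coprime u (int p)"
  shows "\<exists>x::int. [x ^ n = u] (mod int p ^ M)"
proof (cases "M = 0")
  case True
  then show ?thesis by (auto simp: cong_def)
next
  case False
  define m where "m = int p ^ M"
  have p2: "p \<ge> 2" using p prime_ge_2_nat by blast
  have "p ^ M \<ge> p ^ 1" using False p2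
    by (intro power_increasing) auto
  hence "p ^ M > 1" using p2 by simp
  hence m1: "m > 1" unfolding m_def by (metis of_nat_1 of_nat_less_iff of_nat_power)
  interpret residues m "residue_ring m" by unfold_locales (rule m1)
  have um: "coprime u m" unfolding m_def using u by simp
  have E: "[u ^ totient (nat m) = 1] (mod m)" by (rule euler_theorem[OF um])
  have nm: "nat m = p ^ M" unfolding m_def by (simp add: nat_power_eq)
  have tot: "totient (nat m) = p ^ (M - 1) * (p - 1)"
    unfolding nm using totient_prime_power[OF p] False by simp
  have cn: "coprime n (totient (nat m))" unfolding tot using c1 c2
    by (simp add: coprime_commute)
  obtain d where d: "[n * d = Suc 0] (mod totient (nat m))"
    using cong_solve_coprime_nat[OF cn] by blast
  from d[unfolded One_nat_def[symmetric], unfolded cong_to_1'_nat]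
  consider "totient (nat m) = 1" | k where "n * d = 1 + k * totient (nat m)" by blast
  then show ?thesis
  proof cases
    case 1
    with E have "[u = 1] (mod m)" by simp
    hence "[1 ^ n = u] (mod m)" by (simp add: cong_sym)
    then show ?thesis unfolding m_def by blast
  next
    case (2 k)
    have "(u ^ d) ^ n = u * (u ^ totient (nat m)) ^ k"
      by (simp add: power_mult[symmetric] power_add[symmetric] mult.commute 2[unfolded mult.commute[of n]])
    moreover have "[u * (u ^ totient (nat m)) ^ k = u * 1 ^ k] (mod m)"
      by (intro cong_mult cong_pow E cong_refl)
    ultimately have "[(u ^ d) ^ n = u] (mod m)" by simp
    then show ?thesis unfolding m_def by blast
  qed
qed

lemma val_bound:
  fixes p N :: nat and A B :: int
  assumes p: "prime p" and B: "B \<noteq> 0" and nd: "\<not> int p dvd B"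
  shows "padic_abs p (of_int (int p) ^ N * of_int A / of_int B) \<le> 1 / real p ^ N"
proof (cases "A = 0")
  case True
  then show ?thesis by (simp add: padic_abs_def)
next
  case False
  define x :: rat where "x = of_int (int p) ^ N * of_int A / of_int B"
  have p2: "p \<ge> 2" using p prime_ge_2_nat by blast
  have pi: "prime (int p)" using p by simp
  have x0: "x \<noteq> 0" using False B p2 unfolding x_def by simp
  obtain a b where ab: "quotient_of x = (a, b)" by (cases "quotient_of x") auto
  have b0: "b > 0" using quotient_of_denom_pos[OF ab] .
  have xab: "x = of_int a / of_int b" using quotient_of_div[OF ab] .
  have a0: "a \<noteq> 0" using x0 xab by auto
  have "of_int a / of_int b = (of_int (int p ^ N * A) / of_int B :: rat)"
    using xab x_def by simp
  hence "of_int a * of_int B = (of_int (int p ^ N * A) * of_int b :: rat)"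
    using B b0 by (simp add: field_simps)
  hence eq: "a * B = int p ^ N * A * b" 
    by (metis of_int_eq_iff of_int_mult)
  have "multiplicity (int p) (a * B) = multiplicity (int p) (int p ^ N * A * b)"
    using eq by simp
  moreover have "multiplicity (int p) (a * B) = multiplicity (int p) a"
    using a0 B nd pi
    by (simp add: prime_elem_multiplicity_mult_distrib not_dvd_imp_multiplicity_0)
  moreover have "multiplicity (int p) (int p ^ N * A * b) =
      N + multiplicity (int p) A + multiplicity (int p) b"
    using False b0 pi p2
    by (simp add: prime_elem_multiplicity_mult_distrib)
  ultimately have "multiplicity (int p) a \<ge> N + multiplicity (int p) b" by simp
  hence v: "padic_val p x \<ge> int N" unfolding padic_val_def ab by simp
  have "padic_abs p x = real p powi (- padic_val p x)"
    using x0 by (simp add: padic_abs_def)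
  also have "\<dots> \<le> real p powi (- int N)"
    using v p2 by (intro power_int_increasing) auto
  also have "\<dots> = 1 / real p ^ N" by (simp add: power_int_minus divide_inverse)
  finally show ?thesis unfolding x_def .
qed

lemma core:
  fixes p n N :: nat and a b :: int and q :: rat
  assumes p: "prime p" and n1: "n \<ge> 1" and c1: "coprime n p" and c2: "coprime n (p - 1)"
    and a0: "a \<noteq> 0" and b0: "b \<noteq> 0"
    and le: "multiplicity (int p) a \<le> multiplicity (int p) b"
    and cg: "[multiplicity (int p) a = multiplicity (int p) b] (mod n)"
  shows "\<exists>s t s' t'. a * s' ^ n + b * t' ^ n \<noteq> 0 \<and>
     padic_abs p (of_int (a * s ^ n + b * t ^ n) / of_int (a * s' ^ n + b * t' ^ n) - q)
       \<le> 1 / real p ^ N"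
proof -
  define P where "P = int p"
  have pi: "prime P" using p unfolding P_def by simp
  have p2: "p \<ge> 2" using p prime_ge_2_nat by blast
  have P2: "P \<ge> 2" using p2 unfolding P_def by simp
  have Pnu: "\<not> is_unit P" using pi by (metis not_prime_unit)
  have cpP: "\<And>y. \<not> P dvd y \<Longrightarrow> coprime y P"
    using pi by (metis prime_imp_coprime coprime_commute)
  define \<alpha> where "\<alpha> = multiplicity P a"
  define \<beta> where "\<beta> = multiplicity P b"
  obtain k where k: "\<beta> = k * n + \<alpha>"
    using cg le cong_le_nat[of \<alpha> \<beta> n] unfolding \<alpha>_def \<beta>_def P_def
    by (metis cong_sym)
  obtain a' where a': "a = P ^ \<alpha> * a'" "\<not> P dvd a'"
    using multiplicity_decompose'[of a P] a0 Pnu unfolding \<alpha>_def by metis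
  obtain b' where b': "b = P ^ \<beta> * b'" "\<not> P dvd b'"
    using multiplicity_decompose'[of b P] b0 Pnu unfolding \<beta>_def by metis
  obtain A B0 where AB: "quotient_of q = (A, B0)" by (cases "quotient_of q") auto
  have B0: "B0 > 0" using quotient_of_denom_pos[OF AB] .
  have qAB: "q = of_int A / of_int B0" using quotient_of_div[OF AB] .
  have B00: "B0 \<noteq> 0" using B0 by simp
  define e where "e = multiplicity P B0"
  obtain B' where B': "B0 = P ^ e * B'" "\<not> P dvd B'"
    using multiplicity_decompose'[of B0 P] B00 Pnu unfolding e_def by metis
  define f where "f = (n - 1) * e"
  define E where "E = e + f"
  have En: "E = e * n" unfolding E_def f_def using n1
    by (metis add.commute le_add_diff_inverse2 mult.commute mult_Suc plus_1_eq_Suc)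
  define M where "M = N + 1 + E"
  define C where "C = A * P ^ f"
  have cpB: "coprime B' (P ^ M)"
    using cpP[OF B'(2)] by simp
  obtain w where w: "[B' * w = 1] (mod P ^ M)" using cong_solve_coprime_int[OF cpB] by blast
  define T where "T = C * w"
  have M1: "M \<ge> 1" unfolding M_def by simp
  have "\<exists>s0 t0. [a' * s0 ^ n + b' * t0 ^ n = a' * T] (mod P ^ M)"
  proof (cases "P dvd T")
    case False
    hence "coprime T (int p)" using cpP unfolding P_def by simp
    then obtain x where x: "[x ^ n = T] (mod P ^ M)"
      using pow_surj[OF p c1 c2] unfolding P_def by blast
    have "[a' * x ^ n + b' * 0 ^ n = a' * T] (mod P ^ M)"
      using n1 cong_scalar_left[OF x, of a'] by (simp add: power_0_left)
    then show ?thesis by blast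
  next
    case True
    have cpa: "coprime a' (P ^ M)"
      using cpP[OF a'(2)] by simp
    obtain a2 where a2: "[a' * a2 = 1] (mod P ^ M)" using cong_solve_coprime_int[OF cpa] by blast
    have na2: "\<not> P dvd a2"
    proof
      assume "P dvd a2"
      hence "P dvd a' * a2" by simp
      moreover have "P dvd P ^ M" using M1 by (simp add: dvd_power)
      moreover have "P ^ M dvd a' * a2 - 1"
        using a2 unfolding cong_iff_dvd_diff .
      ultimately have h: "P dvd a' * a2 - 1" "P dvd a' * a2" by (blast intro: dvd_trans)+
      have "P dvd a' * a2 - (a' * a2 - 1)" by (rule dvd_diff[OF h(2) h(1)])
      hence "P dvd 1" by simp
      thus False using pi by (simp add: prime_int_iff)
    qed
    have nd: "\<not> P dvd (a' * T - b')"
    proof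
      assume "P dvd (a' * T - b')"
      moreover have "P dvd a' * T" using True by simp
      ultimately have "P dvd a' * T - (a' * T - b')" by (rule dvd_diff[rotated])
      hence "P dvd b'" by simp
      thus False using b'(2) by simp
    qed
    define U where "U = a2 * (a' * T - b')"
    have "\<not> P dvd U" unfolding U_def using na2 nd pi by (simp add: prime_dvd_mult_iff)
    hence "coprime U (int p)" using cpP unfolding P_def by simp
    then obtain x where x: "[x ^ n = U] (mod P ^ M)"
      using pow_surj[OF p c1 c2] unfolding P_def by blast
    have "[a' * x ^ n + b' * 1 ^ n = a' * U + b'] (mod P ^ M)"
      by (simp add: cong_scalar_left x cong_add)
    moreover have "a' * U + b' = (a' * a2) * (a' * T - b') + b'" unfolding U_def by (simp add: algebra_simps)
    moreover have "[(a' * a2) * (a' * T - b') + b' = 1 * (a' * T - b') + b'] (mod P ^ M)"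
      by (intro cong_add cong_mult a2 cong_refl)
    ultimately have "[a' * x ^ n + b' * 1 ^ n = 1 * (a' * T - b') + b'] (mod P ^ M)"
      by (metis cong_trans)
    hence "[a' * x ^ n + b' * 1 ^ n = a' * T] (mod P ^ M)" by simp
    then show ?thesis by blast
  qed
  then obtain s0 t0 where st: "[a' * s0 ^ n + b' * t0 ^ n = a' * T] (mod P ^ M)" by blast
  define V where "V = a' * s0 ^ n + b' * t0 ^ n"
  have "[V * B' = a' * T * B'] (mod P ^ M)" unfolding V_def by (intro cong_scalar_right st)
  moreover have "a' * T * B' = a' * C * (B' * w)" unfolding T_def by (simp add: algebra_simps)
  moreover have "[a' * C * (B' * w) = a' * C * 1] (mod P ^ M)" by (intro cong_scalar_left w)
  ultimately have "[V * B' = a' * C * 1] (mod P ^ M)" by (metis cong_trans)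
  hence "[V * B' = a' * C] (mod P ^ M)" by simp
  then obtain Z where Z: "V * B' - a' * C = P ^ M * Z" unfolding cong_iff_dvd_diff dvd_def by blast
  define s where "s = P ^ k * s0"
  define s' where "s' = P ^ (k + e)"
  have Gst: "a * s ^ n + b * t0 ^ n = P ^ \<beta> * V"
    unfolding s_def V_def a'(1) b'(1) k
    by (simp add: power_mult_distrib power_mult[symmetric] power_add algebra_simps)
  have Gs': "a * s' ^ n + b * 0 ^ n = P ^ \<beta> * a' * P ^ E"
    using n1 unfolding s'_def a'(1) k En
    by (simp add: power_mult_distrib power_mult[symmetric] power_add algebra_simps)
  have a'0: "a' \<noteq> 0" using a'(2) by auto
  have B'0: "B' \<noteq> 0" using B'(2) by auto
  have P0: "P \<noteq> 0" using P2 by simp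
  have nz: "a * s' ^ n + b * 0 ^ n \<noteq> 0" unfolding Gs' using a'0 P0 by simp
  have key: "(of_int (P ^ \<beta> * V) / of_int (P ^ \<beta> * a' * P ^ E) - q :: rat) =
      of_int P ^ (N + 1) * of_int Z / of_int (a' * B')"
  proof -
    have Zr: "(of_int V * of_int B' - of_int a' * of_int A * of_int P ^ f :: rat)
        = of_int P ^ (N + 1) * of_int P ^ e * of_int P ^ f * of_int Z"
      using arg_cong[OF Z, of "of_int :: int \<Rightarrow> rat"] unfolding C_def M_def E_def
      by (simp add: power_add algebra_simps)
    have q': "q = of_int A / (of_int P ^ e * of_int B')" using qAB B'(1) by simp
    show ?thesis unfolding q' E_def using a'0 B'0 P0 Zr
      by (simp add: field_simps power_add)
  qed
  have "padic_abs p (of_int P ^ (N + 1) * of_int Z / of_int (a' * B')) \<le> 1 / real p ^ (N + 1)"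
    unfolding P_def
    by (rule val_bound[OF p]) (use a'0 B'0 a'(2) B'(2) pi in \<open>auto simp: P_def prime_dvd_mult_iff\<close>)
  also have "\<dots> \<le> 1 / real p ^ N" using p2 by (simp add: divide_simps)
  finally show ?thesis using nz key Gst Gs' by metis
qed


lemma dens2:
  fixes p n :: nat and a b :: int and F :: "(nat \<Rightarrow> int) \<Rightarrow> int"
  assumes p: "prime p" and n1: "n \<ge> 1" and c1: "coprime n p" and c2: "coprime n (p - 1)"
    and a0: "a \<noteq> 0" and b0: "b \<noteq> 0"
    and cg: "[multiplicity (int p) a = multiplicity (int p) b] (mod n)"
    and hF: "\<And>s t. \<exists>v. F v = a * s ^ n + b * t ^ n"
  shows "padic_dense p (ratio_set F)"
  unfolding padic_dense_def
proof (intro allI impI)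
  fix q :: rat and \<epsilon> :: real
  assume e: "\<epsilon> > 0"
  have p2: "p \<ge> 2" using p prime_ge_2_nat by blast
  obtain N where N: "(1 / real p) ^ N < \<epsilon>"
    using real_arch_pow_inv[OF e, of "1 / real p"] p2 by auto
  have N': "1 / real p ^ N < \<epsilon>" using N by (simp add: power_one_over)
  have "\<exists>s t s' t'. a * s' ^ n + b * t' ^ n \<noteq> 0 \<and>
     padic_abs p (of_int (a * s ^ n + b * t ^ n) / of_int (a * s' ^ n + b * t' ^ n) - q)
       \<le> 1 / real p ^ N"
  proof (cases "multiplicity (int p) a \<le> multiplicity (int p) b")
    case True
    show ?thesis by (rule core[OF p n1 c1 c2 a0 b0 True cg])
  next
    case False
    then obtain s t s' t' where "b * s' ^ n + a * t' ^ n \<noteq> 0 \<and>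
     padic_abs p (of_int (b * s ^ n + a * t ^ n) / of_int (b * s' ^ n + a * t' ^ n) - q)
       \<le> 1 / real p ^ N"
      using core[OF p n1 c1 c2 b0 a0 _ cong_sym[OF cg], of q N] by auto
    hence "a * t' ^ n + b * s' ^ n \<noteq> 0 \<and>
     padic_abs p (of_int (a * t ^ n + b * s ^ n) / of_int (a * t' ^ n + b * s' ^ n) - q)
       \<le> 1 / real p ^ N" by (simp add: add.commute)
    then show ?thesis by blast
  qed
  then obtain s t s' t' where st: "a * s' ^ n + b * t' ^ n \<noteq> 0"
     "padic_abs p (of_int (a * s ^ n + b * t ^ n) / of_int (a * s' ^ n + b * t' ^ n) - q)
       \<le> 1 / real p ^ N" by blast
  obtain v where v: "F v = a * s ^ n + b * t ^ n" using hF by blast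
  obtain v' where v': "F v' = a * s' ^ n + b * t' ^ n" using hF by blast
  have "of_int (F v) / of_int (F v') \<in> ratio_set F"
  proof -
    have "F v' \<noteq> 0" using st(1) v' by simp
    thus ?thesis unfolding ratio_set_def by blast
  qed
  moreover have "padic_abs p (of_int (F v) / of_int (F v') - q) < \<epsilon>"
    using st(2) N' unfolding v v' by linarith
  ultimately show "\<exists>s\<in>ratio_set F. padic_abs p (s - q) < \<epsilon>" by blast
qed

theorem corollary1p2:
  fixes n p :: nat
  assumes "n \<ge> 3" and "prime p" and "coprime n (p * (p - 1))"
  shows "(\<forall>a b :: int. a * b \<noteq> 0 \<longrightarrow>
            [multiplicity (int p) a = multiplicity (int p) b] (mod n) \<longrightarrow>
            padic_dense p (ratio_set (\<lambda>v. a * v 0 ^ n + b * v 1 ^ n)))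
       \<and> (\<forall>(r::nat) (a :: nat \<Rightarrow> int). r \<ge> 2 \<longrightarrow> (\<Prod>i<r. a i) \<noteq> 0 \<longrightarrow>
            (\<exists>i j. i < j \<and> j < r \<and>
               [multiplicity (int p) (a i) = multiplicity (int p) (a j)] (mod n)) \<longrightarrow>
            padic_dense p (ratio_set (\<lambda>v. \<Sum>i<r. a i * v i ^ n)))"
proof -
  have n1: "n \<ge> 1" using assms(1) by simp
  have c1: "coprime n p" and c2: "coprime n (p - 1)" using assms(3) by auto
  show ?thesis
  proof (intro conjI allI impI)
    fix a b :: int
    assume ab: "a * b \<noteq> 0" and cg: "[multiplicity (int p) a = multiplicity (int p) b] (mod n)"
    have hF: "\<exists>v::nat \<Rightarrow> int. a * v 0 ^ n + b * v 1 ^ n = a * s ^ n + b * t ^ n" for s t :: int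
      by (rule exI[of _ "\<lambda>i. if i = 0 then s else t"]) auto
    show "padic_dense p (ratio_set (\<lambda>v. a * v 0 ^ n + b * v 1 ^ n))"
      by (rule dens2[OF assms(2) n1 c1 c2 _ _ cg]) (use ab hF in auto)
  next
    fix r :: nat and a :: "nat \<Rightarrow> int"
    assume r2: "r \<ge> 2" and pr: "(\<Prod>i<r. a i) \<noteq> 0"
      and ex: "\<exists>i j. i < j \<and> j < r \<and>
               [multiplicity (int p) (a i) = multiplicity (int p) (a j)] (mod n)"
    obtain i j where ij: "i < j" "j < r"
      and cg: "[multiplicity (int p) (a i) = multiplicity (int p) (a j)] (mod n)" using ex by blast
    have ai: "a i \<noteq> 0" and aj: "a j \<noteq> 0" using pr ij by auto
    have hF: "\<exists>v. (\<Sum>k<r. a k * v k ^ n) = a i * s ^ n + a j * t ^ n" for s t :: int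
    proof -
      define v where "v = (\<lambda>k. if k = i then s else if k = j then t else 0)"
      have "(\<Sum>k<r. a k * v k ^ n) =
          (\<Sum>k<r. (if k = i then a i * s ^ n else 0) + (if k = j then a j * t ^ n else 0))"
        by (rule sum.cong) (use ij n1 in \<open>auto simp: v_def\<close>)
      also have "\<dots> = a i * s ^ n + a j * t ^ n"
        using ij by (simp add: sum.distrib)
      finally show ?thesis by blast
    qed
    show "padic_dense p (ratio_set (\<lambda>v. \<Sum>i<r. a i * v i ^ n))"
      by (rule dens2[OF assms(2) n1 c1 c2 ai aj cg hF])
  qed
qed

end
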